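(* Let $\mathbf{V}\in\mathbb{R}^{n\times(k+1)}$ have orthonormal columns and suppose $\mathbf{W}\in\mathbb{R}^{k\times(k+1)}$ satisfies $$\max_{i\in[n]}\Big\{\min_{l\in[k]}\|\mathbf{V}_{i,:}-\mathbf{W}_{l,:}\|\Big\}=\epsilon.$$ Then $\epsilon\ge(3n(k+1)^2)^{-1}$.
   Context: $[n]=\{1,\dots,n\}$; $\|\cdot\|$ is the Euclidean norm; $\mathbf{V}_{i,:}$ denotes the $i$-th row of $\mathbf{V}$. *)

theory Defs
  imports Complex_Main
begin

text \<open>Matrices are represented as functions nat => nat => real, entry (i,j),
  with 0-based indices.  V is n x (k+1), W is k x (k+1).\<close>

definition orthonormal_columns :: "nat \<Rightarrow> nat \<Rightarrow> (nat \<Rightarrow> nat \<Rightarrow> real) \<Rightarrow> bool" where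
  "orthonormal_columns n m V \<longleftrightarrow>
     (\<forall>j<m. \<forall>j'<m. (\<Sum>i<n. V i j * V i j') = (if j = j' then 1 else 0))"

definition row_dist :: "nat \<Rightarrow> (nat \<Rightarrow> nat \<Rightarrow> real) \<Rightarrow> nat \<Rightarrow> (nat \<Rightarrow> nat \<Rightarrow> real) \<Rightarrow> nat \<Rightarrow> real" where
  "row_dist m V i W l = sqrt (\<Sum>j<m. (V i j - W l j)\<^sup>2)"

end

theory Submission imports Defs "Jordan_Normal_Form.Determinant" begin

lemma kernel_exists:
  fixes W :: "nat \<Rightarrow> nat \<Rightarrow> real"
  shows "\<exists>x. (\<exists>j<k+1. x j \<noteq> 0) \<and> (\<forall>l<k. (\<Sum>j<k+1. W l j * x j) = 0)"
proof -
  define c where "c = (\<lambda>i. vec (k+1) (\<lambda>j. W i j))"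
  define A where "A = mat\<^sub>r (k+1) (k+1) (\<lambda>i. if i = k then 0\<^sub>v (k+1) else c i)"
  have A: "A \<in> carrier_mat (k+1) (k+1)" unfolding A_def by auto
  have "det A = 0" unfolding A_def by (rule det_row_0) (auto simp: c_def)
  then obtain v where v: "v \<in> carrier_vec (k+1)" "v \<noteq> 0\<^sub>v (k+1)" "A *\<^sub>v v = 0\<^sub>v (k+1)"
    using det_0_iff_vec_prod_zero[OF A] by blast
  have "\<exists>j<k+1. v $ j \<noteq> 0"
  proof (rule ccontr)
    assume "\<not> ?thesis"
    then have "v = 0\<^sub>v (k+1)" using v(1) by (intro eq_vecI) auto
    then show False using v(2) by simp
  qed
  moreover have "(\<Sum>j<k+1. W l j * v $ j) = 0" if l: "l < k" for l
  proof -
    have "(A *\<^sub>v v) $ l = 0" using v(3) l by simp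
    moreover have "(A *\<^sub>v v) $ l = row A l \<bullet> v" using A l by simp
    moreover have "row A l \<bullet> v = (\<Sum>j<k+1. W l j * v $ j)"
      using l v(1) unfolding A_def c_def scalar_prod_def
      by (auto intro!: sum.cong simp: lessThan_atLeast0)
    ultimately show ?thesis by simp
  qed
  ultimately show ?thesis by (intro exI[of _ "\<lambda>j. v $ j"]) auto
qed

lemma cs_sum:
  fixes a b :: "nat \<Rightarrow> real"
  shows "(\<Sum>i\<in>I. a i * b i)\<^sup>2 \<le> (\<Sum>i\<in>I. (a i)\<^sup>2) * (\<Sum>i\<in>I. (b i)\<^sup>2)"
proof -
  have "0 \<le> (\<Sum>i\<in>I. \<Sum>j\<in>I. (a i * b j - a j * b i)\<^sup>2)"
    by (intro sum_nonneg) auto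
  also have "\<dots> = (\<Sum>i\<in>I. \<Sum>j\<in>I. (a i)\<^sup>2 * (b j)\<^sup>2 + (a j)\<^sup>2 * (b i)\<^sup>2 - 2 * ((a i * b i) * (a j * b j)))"
    by (intro sum.cong refl) (simp add: power2_eq_square algebra_simps)
  also have "\<dots> = (\<Sum>i\<in>I. \<Sum>j\<in>I. (a i)\<^sup>2 * (b j)\<^sup>2) + (\<Sum>i\<in>I. \<Sum>j\<in>I. (a j)\<^sup>2 * (b i)\<^sup>2)
      - 2 * (\<Sum>i\<in>I. \<Sum>j\<in>I. (a i * b i) * (a j * b j))"
    by (simp add: sum_subtractf sum.distrib sum_distrib_left)
  also have "(\<Sum>i\<in>I. \<Sum>j\<in>I. (a j)\<^sup>2 * (b i)\<^sup>2) = (\<Sum>i\<in>I. \<Sum>j\<in>I. (a i)\<^sup>2 * (b j)\<^sup>2)"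
    by (rule sum.swap)
  also have "(\<Sum>i\<in>I. \<Sum>j\<in>I. (a i)\<^sup>2 * (b j)\<^sup>2) = (\<Sum>i\<in>I. (a i)\<^sup>2) * (\<Sum>i\<in>I. (b i)\<^sup>2)"
    by (rule sum_product[symmetric])
  also have "(\<Sum>i\<in>I. \<Sum>j\<in>I. (a i * b i) * (a j * b j)) = (\<Sum>i\<in>I. a i * b i)\<^sup>2"
    unfolding power2_eq_square by (rule sum_product[symmetric])
  finally show ?thesis by simp
qed

theorem corollary7:
  fixes n k :: nat and V W :: "nat \<Rightarrow> nat \<Rightarrow> real" and \<epsilon> :: real
  assumes "k \<ge> 1"
    and "orthonormal_columns n (k + 1) V"
    and "\<epsilon> = Max ((\<lambda>i. Min ((\<lambda>l. row_dist (k + 1) V i W l) ` {..<k})) ` {..<n})"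
  shows "\<epsilon> \<ge> 1 / (3 * real n * (real k + 1)\<^sup>2)"
proof -
  obtain x where x: "\<exists>j<k+1. x j \<noteq> 0" "\<forall>l<k. (\<Sum>j<k+1. W l j * x j) = 0"
    using kernel_exists by blast
  define s where "s = (\<Sum>j<k+1. (x j)\<^sup>2)"
  have s0: "s > 0" unfolding s_def using x(1)
    by (metis finite_lessThan lessThan_iff power2_less_eq_zero_iff sum_pos2 zero_le_power2 not_le)
  define y where "y i = (\<Sum>j<k+1. V i j * x j)" for i
  have close: "\<exists>l<k. row_dist (k+1) V i W l \<le> \<epsilon>" if i: "i < n" for i
  proof -
    let ?m = "Min ((\<lambda>l. row_dist (k + 1) V i W l) ` {..<k})"
    have "?m \<le> \<epsilon>" unfolding assms(3) by (rule Max_ge) (use i in auto)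
    moreover have "?m \<in> (\<lambda>l. row_dist (k + 1) V i W l) ` {..<k}"
      using assms(1) by (intro Min_in) (auto simp: lessThan_empty_iff)
    ultimately show ?thesis by force
  qed
  have eps0: "\<epsilon> \<ge> 0" if n0': "n > 0"
  proof -
    obtain l where "l < k" "row_dist (k+1) V 0 W l \<le> \<epsilon>" using close[OF n0'] by blast
    moreover have "row_dist (k+1) V 0 W l \<ge> 0" unfolding row_dist_def by (intro real_sqrt_ge_zero sum_nonneg) auto
    ultimately show ?thesis by linarith
  qed
  have ybound: "(y i)\<^sup>2 \<le> \<epsilon>\<^sup>2 * s" if i: "i < n" for i
  proof -
    obtain l where l: "l < k" "row_dist (k+1) V i W l \<le> \<epsilon>" using close[OF i] by blast
    have "y i = (\<Sum>j<k+1. V i j * x j) - (\<Sum>j<k+1. W l j * x j)"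
      unfolding y_def using x(2) l(1) by simp
    also have "\<dots> = (\<Sum>j<k+1. (V i j - W l j) * x j)"
      by (simp add: sum_subtractf left_diff_distrib)
    finally have "(y i)\<^sup>2 \<le> (\<Sum>j<k+1. (V i j - W l j)\<^sup>2) * s"
      unfolding s_def using cs_sum by metis
    also have "(\<Sum>j<k+1. (V i j - W l j)\<^sup>2) = (row_dist (k+1) V i W l)\<^sup>2"
      unfolding row_dist_def by (rule real_sqrt_pow2[symmetric], intro sum_nonneg) auto
    also have "\<dots> \<le> \<epsilon>\<^sup>2"
      using l(2) unfolding row_dist_def by (intro power_mono real_sqrt_ge_zero sum_nonneg) auto
    finally show ?thesis using s0 by (simp add: mult_right_mono)
  qed
  have ysum: "(\<Sum>i<n. (y i)\<^sup>2) = s"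
  proof -
    have "(\<Sum>i<n. (y i)\<^sup>2) = (\<Sum>i<n. \<Sum>j<k+1. \<Sum>j'<k+1. x j * x j' * (V i j * V i j'))"
      unfolding y_def power2_eq_square sum_product by (intro sum.cong refl) (simp add: algebra_simps)
    also have "\<dots> = (\<Sum>j<k+1. \<Sum>j'<k+1. x j * x j' * (\<Sum>i<n. V i j * V i j'))"
      by (simp add: sum.swap[of _ "{..<n}"] sum_distrib_left)
    also have "\<dots> = (\<Sum>j<k+1. \<Sum>j'<k+1. x j * x j' * (if j = j' then 1 else 0))"
      using assms(2) unfolding orthonormal_columns_def by (intro sum.cong refl) auto
    also have "\<dots> = (\<Sum>j<k+1. \<Sum>j'<k+1. if j' = j then x j * x j else 0)"
      by (intro sum.cong refl) auto
    also have "\<dots> = s" unfolding s_def by (simp add: power2_eq_square)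
    finally show ?thesis .
  qed
  have "s \<le> real n * (\<epsilon>\<^sup>2 * s)"
  proof -
    have "(\<Sum>i<n. (y i)\<^sup>2) \<le> (\<Sum>i<n. \<epsilon>\<^sup>2 * s)" by (intro sum_mono ybound) auto
    then show ?thesis using ysum by simp
  qed
  then have key: "1 \<le> real n * \<epsilon>\<^sup>2" using s0 by (simp add: mult.assoc[symmetric])
  then have n0: "n > 0" by (cases n) auto
  have e0: "\<epsilon> \<ge> 0" using eps0[OF n0] .
  have e1: "\<epsilon> \<ge> 1 / real n"
  proof (rule ccontr)
    assume "\<not> ?thesis"
    then have "\<epsilon> < 1 / real n" by simp
    then have "\<epsilon>\<^sup>2 < (1 / real n)\<^sup>2" using e0 by (intro power_strict_mono) auto
    then have "real n * \<epsilon>\<^sup>2 < real n * (1 / real n)\<^sup>2" using n0 by simp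
    also have "\<dots> = 1 / real n" using n0 by (simp add: power2_eq_square)
    also have "\<dots> \<le> 1" using n0 by simp
    finally show False using key by simp
  qed
  have "(real k+1)*(real k+1) \<ge> 1*1" by (intro mult_mono) auto
  then have "1 \<le> 3 * ((real k + 1) * (real k + 1))" by linarith
  then have "1 / (3 * real n * (real k + 1)\<^sup>2) \<le> 1 / real n"
    using n0 by (intro divide_left_mono) (auto simp: power2_eq_square)
  with e1 show ?thesis by linarith
qed
end
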